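(* A quadratic vector field $v=P\,\partial_x+Q\,\partial_y$ on $\mathbb{C}^2$ with four distinct non-degenerate singular points is Hamiltonian if and only if $\operatorname{tr}Dv(p)=0$ at every singular point $p$. Consequently, the space $\mathcal{H}_2$ of quadratic Hamiltonian vector fields has dimension $9$.
   Context: $v$ is Hamiltonian if $v=H_y\,\partial_x-H_x\,\partial_y$ for some polynomial $H$, equivalently (on $\mathbb{C}^2$) if $P_x+Q_y\equiv0$. $Dv$ is the Jacobian matrix of $(P,Q)$. A singular point $p$ is non-degenerate if $\det Dv(p)\ne0$. The space of quadratic vector fields has dimension 12. *)

theory Defs
  imports "HOL-Analysis.Analysis"
begin

text \<open>A quadratic vector field v = P d/dx + Q d/dy on C^2 is encoded by its 12 complex
  coefficients c (the space of quadratic vector fields, of dimension 12):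
  P(x,y) = c0 + c1 x + c2 y + c3 x^2 + c4 x y + c5 y^2,
  Q(x,y) = c6 + c7 x + c8 y + c9 x^2 + c10 x y + c11 y^2.\<close>

type_synonym qvf = "complex ^ 12"

definition qP :: "qvf \<Rightarrow> complex \<Rightarrow> complex \<Rightarrow> complex" where
  "qP c x y = c$0 + c$1 * x + c$2 * y + c$3 * x^2 + c$4 * x * y + c$5 * y^2"

definition qQ :: "qvf \<Rightarrow> complex \<Rightarrow> complex \<Rightarrow> complex" where
  "qQ c x y = c$6 + c$7 * x + c$8 * y + c$9 * x^2 + c$10 * x * y + c$11 * y^2"

definition pdx :: "(complex \<Rightarrow> complex \<Rightarrow> complex) \<Rightarrow> complex \<Rightarrow> complex \<Rightarrow> complex" where
  "pdx F x y = deriv (\<lambda>t. F t y) x"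

definition pdy :: "(complex \<Rightarrow> complex \<Rightarrow> complex) \<Rightarrow> complex \<Rightarrow> complex \<Rightarrow> complex" where
  "pdy F x y = deriv (\<lambda>t. F x t) y"

definition poly2 :: "(complex \<Rightarrow> complex \<Rightarrow> complex) \<Rightarrow> bool" where
  "poly2 H \<longleftrightarrow> (\<exists>n::nat. \<exists>a :: nat \<Rightarrow> nat \<Rightarrow> complex.
      \<forall>x y. H x y = (\<Sum>i\<le>n. \<Sum>j\<le>n. a i j * x^i * y^j))"

definition hamiltonian :: "qvf \<Rightarrow> bool" where
  "hamiltonian c \<longleftrightarrow> (\<exists>H. poly2 H \<and>
      (\<forall>x y. qP c x y = pdy H x y \<and> qQ c x y = - pdx H x y))"

definition singular_points :: "qvf \<Rightarrow> (complex \<times> complex) set" where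
  "singular_points c = {(x, y). qP c x y = 0 \<and> qQ c x y = 0}"

definition tr_Dv :: "qvf \<Rightarrow> complex \<times> complex \<Rightarrow> complex" where
  "tr_Dv c p = pdx (qP c) (fst p) (snd p) + pdy (qQ c) (fst p) (snd p)"

definition det_Dv :: "qvf \<Rightarrow> complex \<times> complex \<Rightarrow> complex" where
  "det_Dv c p = pdx (qP c) (fst p) (snd p) * pdy (qQ c) (fst p) (snd p)
              - pdy (qP c) (fst p) (snd p) * pdx (qQ c) (fst p) (snd p)"

definition nondegenerate :: "qvf \<Rightarrow> complex \<times> complex \<Rightarrow> bool" where
  "nondegenerate c p \<longleftrightarrow> det_Dv c p \<noteq> 0"

definition H2 :: "qvf set" where
  "H2 = {c. hamiltonian c}"

end

theory Submission
  imports Defs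
begin

lemma U12: "(UNIV::12 set) = {0,1,2,3,4,5,6,7,8,9,10,11}"
proof -
  have "card {0,1,2,3,4,5,6,7,8,9,10,11::12} = 12" by simp
  then show ?thesis by (intro sym[OF card_subset_eq]) simp_all
qed

lemma U9: "(UNIV::9 set) = {0,1,2,3,4,5,6,7,8}"
proof -
  have "card {0,1,2,3,4,5,6,7,8::9} = 9" by simp
  then show ?thesis by (intro sym[OF card_subset_eq]) simp_all
qed

lemma all9: "(\<forall>i::9. P i) \<longleftrightarrow> P 0 \<and> P 1 \<and> P 2 \<and> P 3 \<and> P 4 \<and> P 5 \<and> P 6 \<and> P 7 \<and> P 8"
proof -
  have "(\<forall>i::9. P i) = (\<forall>i\<in>UNIV. P i)" by simp
  then show ?thesis unfolding U9 by simp
qed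

lemma all12: "(\<forall>i::12. P i) \<longleftrightarrow> P 0 \<and> P 1 \<and> P 2 \<and> P 3 \<and> P 4 \<and> P 5 \<and> P 6 \<and> P 7 \<and> P 8 \<and> P 9 \<and> P 10 \<and> P 11"
proof -
  have "(\<forall>i::12. P i) = (\<forall>i\<in>UNIV. P i)" by simp
  then show ?thesis unfolding U12 by simp
qed

lemma Px: "pdx (qP c) x y = c$1 + 2*c$3*x + c$4*y"
  unfolding pdx_def qP_def
  by (rule DERIV_imp_deriv) (auto intro!: derivative_eq_intros)
lemma Py: "pdy (qP c) x y = c$2 + c$4*x + 2*c$5*y"
  unfolding pdy_def qP_def
  by (rule DERIV_imp_deriv) (auto intro!: derivative_eq_intros)
lemma Qx: "pdx (qQ c) x y = c$7 + 2*c$9*x + c$10*y"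
  unfolding pdx_def qQ_def
  by (rule DERIV_imp_deriv) (auto intro!: derivative_eq_intros)
lemma Qy: "pdy (qQ c) x y = c$8 + c$10*x + 2*c$11*y"
  unfolding pdy_def qQ_def
  by (rule DERIV_imp_deriv) (auto intro!: derivative_eq_intros)

lemma D1: "((\<lambda>t. \<Sum>i\<le>n. \<Sum>j\<le>n. b i j * t^i * g j) has_field_derivative
   (\<Sum>i\<le>n. \<Sum>j\<le>n. b i j * (of_nat i * x^(i-1)) * g j)) (at (x::complex))"
  by (auto intro!: derivative_eq_intros DERIV_sum)

lemma D2: "((\<lambda>t. \<Sum>i\<le>n. \<Sum>j\<le>n. b i j * f i * t^j) has_field_derivative
   (\<Sum>i\<le>n. \<Sum>j\<le>n. b i j * f i * (of_nat j * y^(j-1)))) (at (y::complex))"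
  by (auto intro!: derivative_eq_intros DERIV_sum)

definition div_zero :: "qvf \<Rightarrow> bool" where
  "div_zero c \<longleftrightarrow> c$1 + c$8 = 0 \<and> 2*c$3 + c$10 = 0 \<and> c$4 + 2*c$11 = 0"

lemma ham_div:
  assumes "hamiltonian c" shows "div_zero c"
proof -
  obtain H n a where HP: "\<forall>x y. qP c x y = pdy H x y \<and> qQ c x y = - pdx H x y"
    and Ha: "\<forall>x y. H x y = (\<Sum>i\<le>n. \<Sum>j\<le>n. a i j * x^i * y^j)"
    using assms unfolding hamiltonian_def poly2_def by blast
  have HH: "H = (\<lambda>x y. \<Sum>i\<le>n. \<Sum>j\<le>n. a i j * x^i * y^j)" using Ha by auto
  have Pe: "qP c x y = (\<Sum>i\<le>n. \<Sum>j\<le>n. a i j * x^i * (of_nat j * y^(j-1)))" for x y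
    using HP D2[where b=a and f="\<lambda>i. x^i" and n=n and y=y] unfolding HH pdy_def by (simp add: DERIV_imp_deriv)
  have Qe: "qQ c x y = - (\<Sum>i\<le>n. \<Sum>j\<le>n. a i j * (of_nat i * x^(i-1)) * y^j)" for x y
    using HP D1[where b=a and g="\<lambda>j. y^j" and n=n and x=x] unfolding HH pdx_def by (simp add: DERIV_imp_deriv)
  have "pdx (qP c) x y = (\<Sum>i\<le>n. \<Sum>j\<le>n. a i j * (of_nat i * x^(i-1)) * (of_nat j * y^(j-1)))" for x y
    unfolding pdx_def Pe by (rule DERIV_imp_deriv[OF D1])
  moreover have "pdy (qQ c) x y = - (\<Sum>i\<le>n. \<Sum>j\<le>n. a i j * (of_nat i * x^(i-1)) * (of_nat j * y^(j-1)))" for x y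
    unfolding pdy_def Qe by (rule DERIV_imp_deriv[OF DERIV_minus[OF D2]])
  ultimately have z: "pdx (qP c) x y + pdy (qQ c) x y = 0" for x y by simp
  have "c$1 + c$8 + (2*c$3 + c$10) * x + (c$4 + 2*c$11) * y = 0" for x y
    using z[of x y] unfolding Px Qy by (simp add: algebra_simps)
  from this[of 0 0] this[of 1 0] this[of 0 1] show ?thesis unfolding div_zero_def by simp
qed

lemma div_ham:
  assumes "div_zero c" shows "hamiltonian c"
proof -
  define H where "H = (\<lambda>x y::complex. c$0*y + c$1*x*y + c$2/2*y^2 + c$3*x^2*y + c$4/2*x*y^2
     + c$5/3*y^3 - c$6*x - c$7/2*x^2 - c$9/3*x^3)"
  define a where "a = (\<lambda>(i::nat) (j::nat). if i=0 \<and> j=1 then c$0 else if i=1 \<and> j=1 then c$1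
     else if i=0 \<and> j=2 then c$2/2 else if i=2 \<and> j=1 then c$3 else if i=1 \<and> j=2 then c$4/2
     else if i=0 \<and> j=3 then c$5/3 else if i=1 \<and> j=0 then -c$6 else if i=2 \<and> j=0 then -c$7/2
     else if i=3 \<and> j=0 then -c$9/3 else 0)"
  have "poly2 H" unfolding poly2_def
  proof (intro exI allI)
    fix x y
    show "H x y = (\<Sum>i\<le>(3::nat). \<Sum>j\<le>(3::nat). a i j * x^i * y^j)"
      unfolding H_def a_def by (simp add: eval_nat_numeral algebra_simps)
  qed
  moreover have "qP c x y = pdy H x y" for x y
    unfolding pdy_def H_def qP_def
    by (rule sym, rule DERIV_imp_deriv) (auto intro!: derivative_eq_intros simp: algebra_simps)
  moreover have "qQ c x y = - pdx H x y" for x y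
  proof -
    have h: "c$1 + c$8 = 0" "2*c$3 + c$10 = 0" "c$4 + 2*c$11 = 0"
      using assms unfolding div_zero_def by auto
    have h2: "c$8 = - c$1" "c$10 = -(2*c$3)" "2*c$11 = - c$4"
      using h by (simp_all only: add_eq_0_iff)
    have e: "c$8 = - c$1" "c$10 = -2*c$3" "c$11 = - c$4/2"
      using h2 by (simp_all add: field_simps)
    have "pdx H x y = c$1*y + 2*c$3*x*y + c$4/2*y^2 - c$6 - c$7*x - c$9*x^2"
      unfolding pdx_def H_def
      by (rule DERIV_imp_deriv) (auto intro!: derivative_eq_intros simp: algebra_simps)
    then show ?thesis unfolding qQ_def e by (simp add: algebra_simps)
  qed
  ultimately show ?thesis unfolding hamiltonian_def by blast
qed

lemma ham_iff: "hamiltonian c \<longleftrightarrow> div_zero c"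
  using ham_div div_ham by blast

lemma tr_formula: "tr_Dv c p = c$1 + c$8 + (2*c$3 + c$10) * fst p + (c$4 + 2*c$11) * snd p"
  unfolding tr_Dv_def Px Qy by (simp add: algebra_simps)

lemma quad_zero:
  fixes B C u :: complex
  assumes "B + C = 0" "u*B + u^2*C = 0" "u \<noteq> 0" "u \<noteq> 1"
  shows "B = 0"
proof -
  have "u*(B + u*C) = 0" using assms(2) by (simp add: algebra_simps power2_eq_square)
  then have a: "B + u*C = 0" using assms(3) by simp
  have "(u - 1)*C = (B + u*C) - (B + C)" by (simp add: algebra_simps)
  then have "(u - 1)*C = 0" using a assms(1) by simp
  then have "C = 0" using assms(4) by simp
  then show ?thesis using assms(1) by simp
qed

lemma expandP: "qP c (x1 + t*w1) (y1 + t*w2) = qP c x1 y1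
   + t*((c$1 + 2*c$3*x1 + c$4*y1)*w1 + (c$2 + c$4*x1 + 2*c$5*y1)*w2)
   + t^2*(c$3*w1^2 + c$4*w1*w2 + c$5*w2^2)"
  unfolding qP_def by (simp add: algebra_simps power2_eq_square)

lemma expandQ: "qQ c (x1 + t*w1) (y1 + t*w2) = qQ c x1 y1
   + t*((c$7 + 2*c$9*x1 + c$10*y1)*w1 + (c$8 + c$10*x1 + 2*c$11*y1)*w2)
   + t^2*(c$9*w1^2 + c$10*w1*w2 + c$11*w2^2)"
  unfolding qQ_def by (simp add: algebra_simps power2_eq_square)

lemma key:
  fixes c :: qvf and x1 y1 x2 y2 x3 y3 al be ga :: complex
  assumes P: "qP c x1 y1 = 0" "qP c x2 y2 = 0" "qP c x3 y3 = 0"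
    and Q: "qQ c x1 y1 = 0" "qQ c x2 y2 = 0" "qQ c x3 y3 = 0"
    and d12: "(x1,y1) \<noteq> (x2,y2)" and d13: "(x1,y1) \<noteq> (x3,y3)" and d23: "(x2,y2) \<noteq> (x3,y3)"
    and L: "al + be*x1 + ga*y1 = 0" "al + be*x2 + ga*y2 = 0" "al + be*x3 + ga*y3 = 0"
    and nz: "be \<noteq> 0 \<or> ga \<noteq> 0"
  shows "(c$1 + 2*c$3*x1 + c$4*y1) * (c$8 + c$10*x1 + 2*c$11*y1)
       - (c$2 + c$4*x1 + 2*c$5*y1) * (c$7 + 2*c$9*x1 + c$10*y1) = 0"
proof -
  define w1 where "w1 = x2 - x1"
  define w2 where "w2 = y2 - y1"
  define zz1 where "zz1 = x3 - x1"
  define zz2 where "zz2 = y3 - y1"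
  have "be*w1 + ga*w2 = (al + be*x2 + ga*y2) - (al + be*x1 + ga*y1)"
    by (simp add: w1_def w2_def algebra_simps)
  then have l1: "be*w1 + ga*w2 = 0" using L by simp
  have "be*zz1 + ga*zz2 = (al + be*x3 + ga*y3) - (al + be*x1 + ga*y1)"
    by (simp add: zz1_def zz2_def algebra_simps)
  then have l2: "be*zz1 + ga*zz2 = 0" using L by simp
  have "be*(w1*zz2-w2*zz1) = (be*w1+ga*w2)*zz2 - w2*(be*zz1+ga*zz2)" by (simp add: algebra_simps)
  then have c1: "be*(w1*zz2-w2*zz1) = 0" using l1 l2 by simp
  have "ga*(w1*zz2-w2*zz1) = w1*(be*zz1+ga*zz2) - (be*w1+ga*w2)*zz1" by (simp add: algebra_simps)
  then have c2: "ga*(w1*zz2-w2*zz1) = 0" using l1 l2 by simp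
  have cr: "w1*zz2 = w2*zz1" using c1 c2 nz by auto
  have wnz: "w1 \<noteq> 0 \<or> w2 \<noteq> 0" using d12 by (auto simp: w1_def w2_def)
  obtain u where u1: "zz1 = u*w1" and u2: "zz2 = u*w2"
  proof (cases "w1 = 0")
    case True
    then have "w2 \<noteq> 0" using wnz by simp
    moreover have "w2*zz1 = 0" using cr True by simp
    ultimately have "zz1 = 0" by simp
    then show ?thesis using that[of "zz2/w2"] True \<open>w2 \<noteq> 0\<close> by simp
  next
    case False
    have "zz2 = zz1*w2/w1" using cr False by (simp add: field_simps)
    then show ?thesis using that[of "zz1/w1"] False by simp
  qed
  have un0: "u \<noteq> 0" using d13 u1 u2 by (auto simp: zz1_def zz2_def)
  have un1: "u \<noteq> 1" using d23 u1 u2 by (auto simp: zz1_def zz2_def w1_def w2_def)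
  have p2: "x2 = x1 + 1*w1" "y2 = y1 + 1*w2" by (simp_all add: w1_def w2_def)
  have p3: "x3 = x1 + u*w1" "y3 = y1 + u*w2" using u1 u2 unfolding zz1_def zz2_def by (simp_all add: algebra_simps eq_diff_eq)
  define BP where "BP = (c$1 + 2*c$3*x1 + c$4*y1)*w1 + (c$2 + c$4*x1 + 2*c$5*y1)*w2"
  define CP where "CP = c$3*w1^2 + c$4*w1*w2 + c$5*w2^2"
  define BQ where "BQ = (c$7 + 2*c$9*x1 + c$10*y1)*w1 + (c$8 + c$10*x1 + 2*c$11*y1)*w2"
  define CQ where "CQ = c$9*w1^2 + c$10*w1*w2 + c$11*w2^2"
  have "BP + CP = 0" using P(2) P(1) expandP[of c x1 1 w1 y1 w2] p2 by (simp add: BP_def CP_def)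
  moreover have "u*BP + u^2*CP = 0" using P(3) P(1) expandP[of c x1 u w1 y1 w2] p3 by (simp add: BP_def CP_def)
  ultimately have bp: "BP = 0" using quad_zero un0 un1 by blast
  have "BQ + CQ = 0" using Q(2) Q(1) expandQ[of c x1 1 w1 y1 w2] p2 by (simp add: BQ_def CQ_def)
  moreover have "u*BQ + u^2*CQ = 0" using Q(3) Q(1) expandQ[of c x1 u w1 y1 w2] p3 by (simp add: BQ_def CQ_def)
  ultimately have bq: "BQ = 0" using quad_zero un0 un1 by blast
  define Pa where "Pa = c$1 + 2*c$3*x1 + c$4*y1"
  define Pb where "Pb = c$2 + c$4*x1 + 2*c$5*y1"
  define Qa where "Qa = c$7 + 2*c$9*x1 + c$10*y1"
  define Qb where "Qb = c$8 + c$10*x1 + 2*c$11*y1"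
  have e1: "Pa*w1 + Pb*w2 = 0" "Qa*w1 + Qb*w2 = 0" using bp bq
    by (simp_all add: BP_def BQ_def Pa_def Pb_def Qa_def Qb_def)
  have "w1*(Pa*Qb - Pb*Qa) = Qb*(Pa*w1 + Pb*w2) - Pb*(Qa*w1 + Qb*w2)" by (simp add: algebra_simps)
  then have f1: "w1*(Pa*Qb - Pb*Qa) = 0" using e1 by simp
  have "w2*(Pa*Qb - Pb*Qa) = Pa*(Qa*w1 + Qb*w2) - Qa*(Pa*w1 + Pb*w2)" by (simp add: algebra_simps)
  then have f2: "w2*(Pa*Qb - Pb*Qa) = 0" using e1 by simp
  have "Pa*Qb - Pb*Qa = 0" using f1 f2 wnz by auto
  then show ?thesis by (simp add: Pa_def Pb_def Qa_def Qb_def)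
qed


lemma part1:
  fixes c :: qvf
  assumes card: "card (singular_points c) = 4"
    and nd: "\<forall>p \<in> singular_points c. nondegenerate c p"
  shows "hamiltonian c \<longleftrightarrow> (\<forall>p \<in> singular_points c. tr_Dv c p = 0)"
proof
  assume "hamiltonian c"
  then have "div_zero c" by (rule ham_div)
  then show "\<forall>p \<in> singular_points c. tr_Dv c p = 0"
    unfolding tr_formula div_zero_def by simp
next
  assume tr: "\<forall>p \<in> singular_points c. tr_Dv c p = 0"
  let ?S = "singular_points c"
  have "card ?S = Suc 3" using card by simp
  then obtain p1 B1 where B1: "?S = insert p1 B1" "p1 \<notin> B1" "card B1 = Suc 2"
    using card_eq_SucD by (metis numeral_2_eq_2 numeral_3_eq_3)
  then obtain p2 B2 where B2: "B1 = insert p2 B2" "p2 \<notin> B2" "card B2 = Suc 1"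
    using card_eq_SucD by (metis numeral_2_eq_2 One_nat_def)
  then obtain p3 B3 where B3: "B2 = insert p3 B3" "p3 \<notin> B3"
    using card_eq_SucD by metis
  have in1: "p1 \<in> ?S" and in2: "p2 \<in> ?S" and in3: "p3 \<in> ?S" using B1 B2 B3 by auto
  have d12: "p1 \<noteq> p2" and d13: "p1 \<noteq> p3" and d23: "p2 \<noteq> p3" using B1 B2 B3 by auto
  obtain x1 y1 where e1: "p1 = (x1,y1)" by (cases p1)
  obtain x2 y2 where e2: "p2 = (x2,y2)" by (cases p2)
  obtain x3 y3 where e3: "p3 = (x3,y3)" by (cases p3)
  define al where "al = c$1 + c$8"
  define be where "be = 2*c$3 + c$10"
  define ga where "ga = c$4 + 2*c$11"
  have L: "al + be*x1 + ga*y1 = 0" "al + be*x2 + ga*y2 = 0" "al + be*x3 + ga*y3 = 0"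
    using tr in1 in2 in3 e1 e2 e3 unfolding tr_formula al_def be_def ga_def by auto
  have PQ: "qP c x1 y1 = 0" "qP c x2 y2 = 0" "qP c x3 y3 = 0"
     "qQ c x1 y1 = 0" "qQ c x2 y2 = 0" "qQ c x3 y3 = 0"
    using in1 in2 in3 e1 e2 e3 unfolding singular_points_def by auto
  show "hamiltonian c"
  proof (cases "be = 0 \<and> ga = 0")
    case True
    then have "al = 0" using L(1) by simp
    then have "div_zero c" using True unfolding div_zero_def al_def be_def ga_def by simp
    then show ?thesis by (rule div_ham)
  next
    case False
    then have nz: "be \<noteq> 0 \<or> ga \<noteq> 0" by simp
    have "(c$1 + 2*c$3*x1 + c$4*y1) * (c$8 + c$10*x1 + 2*c$11*y1)
       - (c$2 + c$4*x1 + 2*c$5*y1) * (c$7 + 2*c$9*x1 + c$10*y1) = 0"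
      by (rule key[OF PQ _ _ _ L nz]) (use d12 d13 d23 e1 e2 e3 in auto)
    moreover have "nondegenerate c p1" using nd in1 by blast
    ultimately show ?thesis unfolding nondegenerate_def det_Dv_def Px Py Qx Qy e1 by simp
  qed
qed

definition gmap :: "complex^9 \<Rightarrow> qvf" where
  "gmap z = (\<chi> i. if i=0 then z$0 else if i=1 then z$1 else if i=2 then z$2 else if i=3 then z$3
    else if i=4 then z$4 else if i=5 then z$5 else if i=6 then z$6 else if i=7 then z$7
    else if i=8 then - z$1 else if i=9 then z$8 else if i=10 then -2*z$3 else - z$4/2)"

lemma gmap_lin: "Vector_Spaces.linear (*s) (*s) gmap"
  unfolding Vector_Spaces.linear_iff
  by (auto simp: gmap_def vec_eq_iff field_simps vec.vector_space_axioms)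

lemma gmap_inj: "inj gmap"
proof (rule injI)
  fix x y assume h: "gmap x = gmap y"
  have "gmap x $ i = gmap y $ i" for i using h by simp
  from this[of 0] this[of 1] this[of 2] this[of 3] this[of 4] this[of 5] this[of 6] this[of 7] this[of 9]
  show "x = y" unfolding vec_eq_iff all9 by (simp add: gmap_def)
qed

lemma gmap_range: "range gmap = H2"
proof
  show "range gmap \<subseteq> H2" unfolding H2_def ham_iff div_zero_def by (auto simp: gmap_def)
next
  show "H2 \<subseteq> range gmap"
  proof
    fix c assume "c \<in> H2"
    then have h: "c$1 + c$8 = 0" "2*c$3 + c$10 = 0" "c$4 + 2*c$11 = 0"
      unfolding H2_def ham_iff div_zero_def by auto
    have h2: "c$8 = - c$1" "c$10 = -(2*c$3)" "2*c$11 = - c$4"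
      using h by (simp_all only: add_eq_0_iff)
    have e: "c$8 = - c$1" "c$10 = -2*c$3" "c$11 = - c$4/2"
      using h2 by (simp_all add: field_simps)
    define z :: "complex^9" where "z = (\<chi> k. if k=0 then c$0 else if k=1 then c$1 else if k=2 then c$2
      else if k=3 then c$3 else if k=4 then c$4 else if k=5 then c$5 else if k=6 then c$6
      else if k=7 then c$7 else c$9)"
    have "c = gmap z" unfolding vec_eq_iff all12 using e by (simp add: gmap_def z_def)
    then show "c \<in> range gmap" by blast
  qed
qed

lemma dimH2: "vec.dim H2 = 9"
proof -
  have "vec.dim H2 = vec.dim (gmap ` UNIV)" using gmap_range by simp
  also have "\<dots> = vec.dim (UNIV :: (complex^9) set)"
    by (rule vec.dim_image_eq[OF gmap_lin]) (use gmap_inj in \<open>auto simp: inj_on_def inj_def\<close>)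
  also have "\<dots> = 9" by (simp add: card_cart_basis)
  finally show ?thesis .
qed

theorem mainTheorem5:
  shows "(\<forall>c :: qvf. card (singular_points c) = 4 \<and>
              (\<forall>p \<in> singular_points c. nondegenerate c p) \<longrightarrow>
            (hamiltonian c \<longleftrightarrow> (\<forall>p \<in> singular_points c. tr_Dv c p = 0)))
         \<and> vec.dim H2 = 9"
  using part1 dimH2 by blast

end
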